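(* Let $r>0$, $a<b$, $f\in L^\infty_{\rm loc}(\mathbb{R})$, $\alpha,\beta\in L^\infty_{\rm loc}(\mathbb{R})$. The problem $$D_ru=f\ \text{in }(a,b),\qquad u=\alpha\ \text{in }[a-r,a],\qquad u=\beta\ \text{in }[b,b+r]$$ has a unique solution $u$ on $[a-r,b+r]$ (up to null sets), given by $u=\alpha$ on $[a-r,a]$, $u=\beta$ on $[b,b+r]$, and for $x\in(a,b)$ $$u(x)=\frac{\overline k(x)}{\overline k(x)+\underline k(x)}\Big(\alpha(x-\underline k(x)r)-r^2\sum_{j=1}^{\underline k(x)-1}j\,f\big(x-(\underline k(x)-j)r\big)\Big)+\frac{\underline k(x)}{\overline k(x)+\underline k(x)}\Big(\beta(x+\overline k(x)r)-r^2\sum_{j=1}^{\overline k(x)-1}j\,f\big(x+(\overline k(x)-j)r\big)\Big)-r^2\frac{\underline k(x)\overline k(x)}{\overline k(x)+\underline k(x)}f(x),$$ where $\overline k(x):=\lceil (b-x)/r\rceil$ and $\underline k(x):=\lceil (x-a)/r\rceil$.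
   Context: $D_ru(x):=\dfrac{u(x+r)+u(x-r)-2u(x)}{r^2}$. The equation $D_ru=f$ in $(a,b)$ is required for a.e. $x\in(a,b)$. $\lceil t\rceil$ denotes the smallest integer $\ge t$. *)

theory Defs
  imports "HOL-Analysis.Analysis"
begin

definition Dr :: "real \<Rightarrow> (real \<Rightarrow> real) \<Rightarrow> real \<Rightarrow> real" where
  "Dr r u x = (u (x + r) + u (x - r) - 2 * u x) / r^2"

definition Linf_loc :: "(real \<Rightarrow> real) \<Rightarrow> bool" where
  "Linf_loc g \<longleftrightarrow> g \<in> borel_measurable lebesgue \<and>
     (\<forall>K. compact K \<longrightarrow> (\<exists>C. AE x in lebesgue. x \<in> K \<longrightarrow> \<bar>g x\<bar> \<le> C))"

definition is_solution ::
  "real \<Rightarrow> real \<Rightarrow> real \<Rightarrow> (real \<Rightarrow> real) \<Rightarrow> (real \<Rightarrow> real) \<Rightarrow> (real \<Rightarrow> real) \<Rightarrow> (real \<Rightarrow> real) \<Rightarrow> bool" where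
  "is_solution r a b f \<alpha> \<beta> u \<longleftrightarrow>
     (AE x in lebesgue. x \<in> {a<..<b} \<longrightarrow> Dr r u x = f x) \<and>
     (AE x in lebesgue. x \<in> {a-r..a} \<longrightarrow> u x = \<alpha> x) \<and>
     (AE x in lebesgue. x \<in> {b..b+r} \<longrightarrow> u x = \<beta> x)"

definition kbar :: "real \<Rightarrow> real \<Rightarrow> real \<Rightarrow> nat" where
  "kbar r b x = nat \<lceil>(b - x) / r\<rceil>"

definition kund :: "real \<Rightarrow> real \<Rightarrow> real \<Rightarrow> nat" where
  "kund r a x = nat \<lceil>(x - a) / r\<rceil>"

definition explicit_sol ::
  "real \<Rightarrow> real \<Rightarrow> real \<Rightarrow> (real \<Rightarrow> real) \<Rightarrow> (real \<Rightarrow> real) \<Rightarrow> (real \<Rightarrow> real) \<Rightarrow> real \<Rightarrow> real" where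
  "explicit_sol r a b f \<alpha> \<beta> x =
     (if x \<in> {a-r..a} then \<alpha> x
      else if x \<in> {b..b+r} then \<beta> x
      else (let kb = kbar r b x; ku = kund r a x in
        real kb / (real kb + real ku) *
          (\<alpha> (x - real ku * r) - r^2 * (\<Sum>j\<in>{1..<ku}. real j * f (x - (real ku - real j) * r)))
        + real ku / (real kb + real ku) *
          (\<beta> (x + real kb * r) - r^2 * (\<Sum>j\<in>{1..<kb}. real j * f (x + (real kb - real j) * r)))
        - r^2 * (real ku * real kb / (real kb + real ku)) * f x))"

end

theory Submission
  imports Defs
begin

definition V :: "real \<Rightarrow> nat \<Rightarrow> real \<Rightarrow> real \<Rightarrow> (nat \<Rightarrow> real) \<Rightarrow> nat \<Rightarrow> real" where
"V r n A B c i = real (n-i) * (1 / real n) * (A - r^2 * (\<Sum>j\<in>{1..<i}. real j * c j))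
   + real i * (1 / real n) * (B - r^2 * (\<Sum>j\<in>{1..<n-i}. real j * c (n-j)))
   - r^2 * (real i * real (n-i) * (1 / real n)) * c i"

lemma sum_step: "(\<Sum>j\<in>{1..<Suc k}. real j * h j) = (\<Sum>j\<in>{1..<k}. real j * h j) + real k * h k"
  by (cases k) auto

lemma disc:
  assumes "n = p + q + 2"
  shows "V r n A B c (p+2) + V r n A B c p - 2 * V r n A B c (p+1) = r^2 * c (p+1)"
proof -
  have e1: "n - (p+2) = q" "n - p = Suc (Suc q)" "n - (p+1) = Suc q" "p + 2 = Suc (Suc p)" "p+1 = Suc p" "n - Suc (Suc p) = q" "n - Suc p = Suc q"
    using assms by auto
  have e2: "c (n - Suc q) = c (Suc p)" "c (n - q) = c (Suc (Suc p))" using assms by (auto intro: arg_cong[where f=c])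
  have m: "(real p + real q + 2) * (1 / real n) = 1" using assms by simp
  show ?thesis unfolding V_def e1 sum_step e2
    using m unfolding of_nat_Suc of_nat_add by algebra
qed

lemma AE_transl:
  assumes "AE x in lebesgue. P x" shows "AE x in lebesgue. P (x + t)"
proof -
  obtain N where N1: "\<And>x. x \<in> space lebesgue - N \<Longrightarrow> P x" and N2: "N \<in> null_sets lebesgue"
    using AE_E3[OF assms] by metis
  have "negligible N" using N2 by (simp add: negligible_iff_null_sets)
  then have "negligible ((+) (-t) ` N)" by (rule negligible_translation)
  then have nn: "(+) (-t) ` N \<in> null_sets lebesgue" by (simp add: negligible_iff_null_sets)
  have sub: "{x \<in> space lebesgue. \<not> P (x + t)} \<subseteq> (+) (-t) ` N"
  proof
    fix x assume "x \<in> {x \<in> space lebesgue. \<not> P (x + t)}"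
    then have "x + t \<in> N" using N1 by auto
    then show "x \<in> (+) (-t) ` N" by (rule rev_image_eqI) simp
  qed
  show ?thesis by (rule AE_I'[OF nn sub])
qed

lemma kfacts:
  assumes r: "r > 0" and x: "x \<in> {a<..<b}"
  shows "kund r a x \<ge> 1" "kbar r b x \<ge> 1"
    "(real (kund r a x) - 1) * r < x - a" "x - a \<le> real (kund r a x) * r"
    "(real (kbar r b x) - 1) * r < b - x" "b - x \<le> real (kbar r b x) * r"
proof -
  have p1: "(x - a) / r > 0" "(b - x)/r > 0" using r x by auto
  have c1: "\<lceil>(x - a) / r\<rceil> \<ge> 1" "\<lceil>(b - x) / r\<rceil> \<ge> 1" using p1 by simp_all
  have ki: "int (kund r a x) = \<lceil>(x - a) / r\<rceil>" "int (kbar r b x) = \<lceil>(b - x) / r\<rceil>"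
    unfolding kund_def kbar_def using c1 by simp_all
  show "kund r a x \<ge> 1" "kbar r b x \<ge> 1" using ki c1 by linarith+
  have e: "real (kund r a x) = of_int \<lceil>(x - a) / r\<rceil>" "real (kbar r b x) = of_int \<lceil>(b - x) / r\<rceil>"
    by (metis ki of_int_of_nat_eq)+
  have q1: "of_int \<lceil>(x - a) / r\<rceil> - 1 < (x - a) / r \<and> (x - a) / r \<le> of_int \<lceil>(x - a) / r\<rceil>"
    by (rule ceiling_correct)
  have q2: "of_int \<lceil>(b - x) / r\<rceil> - 1 < (b - x) / r \<and> (b - x) / r \<le> of_int \<lceil>(b - x) / r\<rceil>"
    by (rule ceiling_correct)
  show "(real (kund r a x) - 1) * r < x - a" using conjunct1[OF q1] unfolding e pos_less_divide_eq[OF r] .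
  show "x - a \<le> real (kund r a x) * r" using conjunct2[OF q1] unfolding e pos_divide_le_eq[OF r] .
  show "(real (kbar r b x) - 1) * r < b - x" using conjunct1[OF q2] unfolding e pos_less_divide_eq[OF r] .
  show "b - x \<le> real (kbar r b x) * r" using conjunct2[OF q2] unfolding e pos_divide_le_eq[OF r] .
qed

lemma locs:
  assumes r: "r > 0" and x: "x \<in> {a<..<b}"
  defines "ku \<equiv> kund r a x" and "kb \<equiv> kbar r b x"
  shows "x + (real 0 - real ku) * r \<in> {a-r..a}"
    "x + (real (ku+kb) - real ku) * r \<in> {b..b+r}"
    "0 < i \<Longrightarrow> i < ku + kb \<Longrightarrow> x + (real i - real ku) * r \<in> {a<..<b} \<and>
        kund r a (x + (real i - real ku) * r) = i \<and> kbar r b (x + (real i - real ku) * r) = ku + kb - i"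
proof -
  note k = kfacts[OF r x, folded ku_def kb_def]
  show "x + (real 0 - real ku) * r \<in> {a-r..a}" using k by (auto simp: algebra_simps)
  show "x + (real (ku+kb) - real ku) * r \<in> {b..b+r}" using k by (auto simp: algebra_simps)
  assume i: "0 < i" "i < ku + kb"
  let ?y = "x + (real i - real ku) * r"
  have ri: "real i \<ge> 1" "real i + 1 \<le> real ku + real kb" using i by auto
  have m1: "(real i - 1) * r \<ge> 0" using ri r by simp
  have m2: "(real ku + real kb - real i - 1) * r \<ge> 0" using ri r by simp
  have ya: "?y - a > (real i - 1) * r" using k(3) by (simp add: algebra_simps)
  have yb: "b - ?y > (real ku + real kb - real i - 1) * r" using k(5) by (simp add: algebra_simps)
  show "?y \<in> {a<..<b} \<and> kund r a ?y = i \<and> kbar r b ?y = ku + kb - i"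
  proof (intro conjI)
    show "?y \<in> {a<..<b}" using ya yb m1 m2 by auto
    have "\<lceil>(?y - a) / r\<rceil> = int i"
      unfolding ceiling_eq_iff using ya k(4) r by (auto simp: field_simps)
    then show "kund r a ?y = i" unfolding kund_def by simp
    have "\<lceil>(b - ?y) / r\<rceil> = int (ku + kb - i)"
      unfolding ceiling_eq_iff using yb k(6) r i by (auto simp: field_simps of_nat_diff)
    then show "kbar r b ?y = ku + kb - i" unfolding kbar_def by simp
  qed
qed

lemma chain:
  fixes f \<alpha> \<beta> :: "real \<Rightarrow> real"
  assumes r: "r > 0" and x: "x \<in> {a<..<b}" and a: "a < b"
  defines "ku \<equiv> kund r a x" and "kb \<equiv> kbar r b x"
  defines "c \<equiv> (\<lambda>m::nat. f (x + (real m - real ku) * r))"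
  assumes i: "i \<le> ku + kb"
  shows "explicit_sol r a b f \<alpha> \<beta> (x + (real i - real ku) * r)
     = V r (ku+kb) (\<alpha> (x - real ku * r)) (\<beta> (x + real kb * r)) c i"
proof -
  note k = kfacts[OF r x, folded ku_def kb_def]
  note l = locs[OF r x, folded ku_def kb_def]
  let ?n = "ku + kb"
  have npos: "real ?n > 0" using k by simp
  consider "i = 0" | "i = ?n" | "0 < i \<and> i < ?n" using i by linarith
  then show ?thesis
  proof cases
    case 1
    have yn: "x + (real i - real ku) * r = x - real ku * r" using 1 by simp
    have ya: "x - real ku * r \<in> {a-r..a}" using l(1) by simp
    have "explicit_sol r a b f \<alpha> \<beta> (x + (real i - real ku) * r) = \<alpha> (x - real ku * r)"
      unfolding yn explicit_sol_def by (simp only: if_P[OF ya])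
    then show ?thesis using 1 npos unfolding V_def by simp
  next
    case 2
    have yn: "x + (real i - real ku) * r = x + real kb * r" using 2 by (simp add: algebra_simps)
    have yb: "x + real kb * r \<in> {b..b+r}" using l(2) by (simp add: algebra_simps)
    have nin: "x + real kb * r \<notin> {a-r..a}" using yb a by auto
    have "explicit_sol r a b f \<alpha> \<beta> (x + (real i - real ku) * r) = \<beta> (x + real kb * r)"
      unfolding yn explicit_sol_def by (simp only: if_not_P[OF nin] if_P[OF yb])
    then show ?thesis using 2 npos unfolding V_def by simp
  next
    case 3
    let ?y = "x + (real i - real ku) * r"
    have L: "?y \<in> {a<..<b}" "kund r a ?y = i" "kbar r b ?y = ?n - i" using l(3) 3 by auto
    have nn: "real (?n - i) + real i = real ?n" using 3 by simp
    have A: "\<alpha> (?y - real i * r) = \<alpha> (x - real ku * r)" by (simp add: algebra_simps)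
    have B: "\<beta> (?y + real (?n - i) * r) = \<beta> (x + real kb * r)" using 3 by (simp add: algebra_simps of_nat_diff)
    have S1: "(\<Sum>j\<in>{1..<i}. real j * f (?y - (real i - real j) * r)) = (\<Sum>j\<in>{1..<i}. real j * c j)"
      unfolding c_def by (rule sum.cong) (auto simp: algebra_simps)
    have S2: "(\<Sum>j\<in>{1..<?n - i}. real j * f (?y + (real (?n - i) - real j) * r)) = (\<Sum>j\<in>{1..<?n-i}. real j * c (?n - j))"
      unfolding c_def using 3 by (intro sum.cong) (auto simp: algebra_simps of_nat_diff)
    have F: "f ?y = c i" unfolding c_def ..
    have nin1: "?y \<notin> {a-r..a}" and nin2: "?y \<notin> {b..b+r}" using L(1) by auto
    have "explicit_sol r a b f \<alpha> \<beta> ?y =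
       real (?n - i) / (real (?n - i) + real i) *
          (\<alpha> (?y - real i * r) - r^2 * (\<Sum>j\<in>{1..<i}. real j * f (?y - (real i - real j) * r)))
        + real i / (real (?n - i) + real i) *
          (\<beta> (?y + real (?n - i) * r) - r^2 * (\<Sum>j\<in>{1..<?n - i}. real j * f (?y + (real (?n - i) - real j) * r)))
        - r^2 * (real i * real (?n - i) / (real (?n - i) + real i)) * f ?y"
      unfolding explicit_sol_def Let_def if_not_P[OF nin1] if_not_P[OF nin2] L(2) L(3) by (rule refl)
    also have "\<dots> = V r ?n (\<alpha> (x - real ku * r)) (\<beta> (x + real kb * r)) c i"
      unfolding nn A B S1 S2 F V_def by simp
    finally show ?thesis .
  qed
qed

lemma partA:
  assumes r: "r > 0" and x: "x \<in> {a<..<b}" and a: "a < b"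
  shows "Dr r (explicit_sol r a b f \<alpha> \<beta>) x = f x"
proof -
  define ku where "ku = kund r a x"
  define kb where "kb = kbar r b x"
  note k = kfacts[OF r x, folded ku_def kb_def]
  let ?E = "explicit_sol r a b f \<alpha> \<beta>"
  let ?c = "\<lambda>m::nat. f (x + (real m - real ku) * r)"
  let ?V = "V r (ku+kb) (\<alpha> (x - real ku * r)) (\<beta> (x + real kb * r)) ?c"
  note ch = chain[OF r x a, of i f \<alpha> \<beta> for i, folded ku_def kb_def]
  obtain p q where pq: "ku = p + 1" "kb = q + 1" using k by (metis add.commute le_Suc_ex Suc_eq_plus1_left)
  have e1: "?E (x + r) = ?V (p+2)" using ch[of "p+2"] pq by (simp add: algebra_simps)
  have e2: "?E (x - r) = ?V p" using ch[of "p"] pq by (simp add: algebra_simps)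
  have e3: "?E x = ?V (p+1)" using ch[of "p+1"] pq by (simp add: algebra_simps)
  have d: "?V (p+2) + ?V p - 2 * ?V (p+1) = r^2 * ?c (p+1)" by (rule disc) (simp add: pq)
  have cf: "?c (p+1) = f x" unfolding pq by simp
  have "Dr r ?E x = (r^2 * ?c (p+1)) / r^2" unfolding Dr_def e1 e2 e3 d by (rule refl)
  also have "\<dots> = f x" unfolding cf using r by simp
  finally show ?thesis .
qed

lemma disc_zero:
  fixes d :: "nat \<Rightarrow> real"
  assumes d0: "d 0 = 0" and dn: "d n = 0"
    and rec: "\<And>i. 1 \<le> i \<Longrightarrow> i + 1 \<le> n \<Longrightarrow> d (i+1) + d (i-1) - 2 * d i = 0"
    and i: "i \<le> n"
  shows "d i = 0"
proof -
  have lin: "k + 1 \<le> n \<Longrightarrow> d k = real k * d 1 \<and> d (Suc k) = real (Suc k) * d 1" for k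
  proof (induction k)
    case 0 then show ?case using d0 by simp
  next
    case (Suc k)
    then have ih: "d k = real k * d 1" "d (Suc k) = real (Suc k) * d 1" by auto
    have "d (Suc k + 1) + d (Suc k - 1) - 2 * d (Suc k) = 0" using Suc.prems by (intro rec) auto
    then have "d (Suc (Suc k)) = 2 * d (Suc k) - d k" by simp
    then show ?case using ih by (simp add: algebra_simps)
  qed
  show ?thesis
  proof (cases "n = 0")
    case True then show ?thesis using i d0 by simp
  next
    case False
    then have "d n = real n * d 1" using lin[of "n - 1"] by simp
    then have d1: "d 1 = 0" using dn False by simp
    show ?thesis
    proof (cases "i = n")
      case True then show ?thesis using dn by simp
    next
      case False then show ?thesis using lin[of i] i d1 by simp
    qed
  qed
qed

theorem theorem1p9:
  fixes r a b :: real and f \<alpha> \<beta> :: "real \<Rightarrow> real"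
  assumes "r > 0" and "a < b"
    and "Linf_loc f" and "Linf_loc \<alpha>" and "Linf_loc \<beta>"
  shows "is_solution r a b f \<alpha> \<beta> (explicit_sol r a b f \<alpha> \<beta>) \<and>
         (\<forall>u. is_solution r a b f \<alpha> \<beta> u \<longrightarrow>
            (AE x in lebesgue. x \<in> {a-r..b+r} \<longrightarrow> u x = explicit_sol r a b f \<alpha> \<beta> x))"
proof
  note r = assms(1) and ab = assms(2)
  let ?E = "explicit_sol r a b f \<alpha> \<beta>"
  have EA: "?E x = \<alpha> x" if "x \<in> {a-r..a}" for x
    unfolding explicit_sol_def by (simp only: if_P[OF that])
  have EB: "?E x = \<beta> x" if "x \<in> {b..b+r}" for x
  proof -
    have nin: "x \<notin> {a-r..a}" using that ab by auto
    show ?thesis unfolding explicit_sol_def by (simp only: if_not_P[OF nin] if_P[OF that])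
  qed
  show "is_solution r a b f \<alpha> \<beta> ?E"
    unfolding is_solution_def
    using partA[OF r _ ab] EA EB by (intro conjI AE_I2) auto
  show "\<forall>u. is_solution r a b f \<alpha> \<beta> u \<longrightarrow>
            (AE x in lebesgue. x \<in> {a-r..b+r} \<longrightarrow> u x = ?E x)"
  proof (intro allI impI)
    fix u assume sol: "is_solution r a b f \<alpha> \<beta> u"
    define Q where "Q x \<longleftrightarrow> (x \<in> {a<..<b} \<longrightarrow> Dr r u x = f x) \<and> (x \<in> {a-r..a} \<longrightarrow> u x = \<alpha> x)
        \<and> (x \<in> {b..b+r} \<longrightarrow> u x = \<beta> x)" for x
    have "AE x in lebesgue. Q x"
      using sol unfolding is_solution_def Q_def by (intro eventually_conj) auto
    then have "\<forall>k::int. AE x in lebesgue. Q (x + of_int k * r)"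
      by (intro allI AE_transl)
    then have AQ: "AE x in lebesgue. \<forall>k::int. Q (x + of_int k * r)"
      by (rule AE_all_countable[THEN iffD2])
    show "AE x in lebesgue. x \<in> {a-r..b+r} \<longrightarrow> u x = ?E x"
      using AQ
    proof (rule eventually_mono)
      fix x assume H: "\<forall>k::int. Q (x + of_int k * r)"
      show "x \<in> {a-r..b+r} \<longrightarrow> u x = ?E x"
      proof
        assume xin: "x \<in> {a-r..b+r}"
        have Qx: "Q x" using H[rule_format, of 0] by simp
        consider "x \<in> {a-r..a}" | "x \<in> {b..b+r}" | "x \<in> {a<..<b}" using xin by force
        then show "u x = ?E x"
        proof cases
          case 1 then show ?thesis using Qx EA unfolding Q_def by simp
        next
          case 2 then show ?thesis using Qx EB unfolding Q_def by simp
        next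
          case 3
          define ku where "ku = kund r a x"
          define kb where "kb = kbar r b x"
          note k = kfacts[OF r 3, folded ku_def kb_def]
          note l = locs[OF r 3, folded ku_def kb_def]
          define y where "y i = x + (real i - real ku) * r" for i :: nat
          have Qy: "Q (y i)" for i
            using H[rule_format, of "int i - int ku"] unfolding y_def by simp
          define d where "d i = u (y i) - ?E (y i)" for i
          have d0: "d 0 = 0"
          proof -
            have "y 0 \<in> {a-r..a}" using l(1) unfolding y_def by simp
            then show ?thesis using Qy[of 0] EA unfolding Q_def d_def by simp
          qed
          have dn: "d (ku+kb) = 0"
          proof -
            have "y (ku+kb) \<in> {b..b+r}" using l(2) unfolding y_def by simp
            then show ?thesis using Qy[of "ku+kb"] EB unfolding Q_def d_def by simp
          qed
          have rec: "d (i+1) + d (i-1) - 2 * d i = 0" if i1: "1 \<le> i" "i + 1 \<le> ku + kb" for i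
          proof -
            have yi: "y i \<in> {a<..<b}" using l(3)[of i] i1 unfolding y_def by simp
            have D1: "Dr r u (y i) = f (y i)" using Qy[of i] yi unfolding Q_def by simp
            have D2: "Dr r ?E (y i) = f (y i)" by (rule partA[OF r yi ab])
            have p1: "y i + r = y (i+1)" unfolding y_def by (simp add: algebra_simps)
            have p2: "y i - r = y (i-1)" using i1 unfolding y_def by (simp add: algebra_simps of_nat_diff)
            have "(u (y (i+1)) + u (y (i-1)) - 2 * u (y i)) / r^2 = (?E (y (i+1)) + ?E (y (i-1)) - 2 * ?E (y i)) / r^2"
              using D1 D2 unfolding Dr_def p1 p2 by simp
            then have "u (y (i+1)) + u (y (i-1)) - 2 * u (y i) = ?E (y (i+1)) + ?E (y (i-1)) - 2 * ?E (y i)"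
              using r by simp
            then show ?thesis unfolding d_def by simp
          qed
          have "d ku = 0" by (rule disc_zero[OF d0 dn rec]) auto
          moreover have "y ku = x" unfolding y_def by simp
          ultimately show ?thesis unfolding d_def by simp
        qed
      qed
    qed
  qed
qed

end
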